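(* Let $S$ be an instance of 3-Partition (with $n_1\ge\cdots\ge n_{3m}$), let $1\le k\le 3m$, let $i_1,\dots,i_{3m-k+1}$ be natural numbers and $W=\prod_{j=1}^{3m-k+1}(a_1b^{i_j}a_2)$. Suppose there is an index $J$ with $i_J=\max_j\{i_j\}=n_k$. Let $i'_1,\dots,i'_{3m-k}$ be the sequence $\langle i_j\rangle_j$ with the entry $i_J$ omitted, and $W'=\prod_{j=1}^{3m-k}(a_1b^{i'_j}a_2)$. Then for every string $T$ there is a computation $$W\,\|\,v_{4k-1}E_kv_{4k-1}\,v_{4k}F_kv_{4k}\,T\;\vdash^*\;W'\,\|\,T.$$
   Context: Queue automaton: a configuration is written $Q\,\|\,x$ ($Q$ = queue contents, $x$ = remaining input); a step from $Q\,\|\,\sigma x$ ($\sigma$ a symbol) goes either to $Q\sigma\,\|\,x$ (push) or, if $Q=\sigma Q'$, to $Q'\,\|\,x$ (match/pop). $\vdash^*$ is zero or more steps. An instance of 3-Partition is a sequence $S=\langle n_i:1\le i\le 3m\rangle$ of natural numbers such that $B=(\sum_{i=1}^{3m}n_i)/m$ is an integer and $B/4<n_i<B/2$ for all $i$; throughout, the $n_i$ are in non-increasing order. Alphabet $\{a_1,a_2,b,e_0,e,c_1,c_2,x,y\}$; $u^i$ is $i$ copies of $u$ concatenated, $\prod_{\ell=1}^k u_\ell=u_1\cdots u_k$. Define $U_\ell=a_1^2b^\ell a_2^2$, $v_\ell=c_1x^\ell y^\ell c_2$, $E_k=U_B^{3m-k}\,a_1b^{n_k}a_2\,U_B^{3m-k}$,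 $F_k=U_B^{2(3m-k)}$. *)

theory Defs
  imports Main
begin

datatype sym = a1 | a2 | b | e0 | e | c1 | c2 | x | y

text \<open>One step of the queue automaton on configurations (queue, remaining input).\<close>
inductive qstep :: "sym list \<times> sym list \<Rightarrow> sym list \<times> sym list \<Rightarrow> bool" where
  push: "qstep (Q, \<sigma> # w) (Q @ [\<sigma>], w)"
| pop:  "qstep (\<sigma> # Q, \<sigma> # w) (Q, w)"

abbreviation qsteps :: "sym list \<times> sym list \<Rightarrow> sym list \<times> sym list \<Rightarrow> bool" where
  "qsteps \<equiv> qstep\<^sup>*\<^sup>*"

definition three_partition_instance :: "nat list \<Rightarrow> nat \<Rightarrow> bool" where
  "three_partition_instance S m \<longleftrightarrow>
     m \<ge> 1 \<and> length S = 3 * m \<and> m dvd sum_list S \<and>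
     (\<forall>i < length S. 4 * S ! i > sum_list S div m \<and> 2 * S ! i < sum_list S div m) \<and>
     sorted_wrt (\<ge>) S"

definition bound :: "nat list \<Rightarrow> nat \<Rightarrow> nat" where
  "bound S m = sum_list S div m"

definition U :: "nat \<Rightarrow> sym list" where
  "U l = [a1, a1] @ replicate l b @ [a2, a2]"

definition v :: "nat \<Rightarrow> sym list" where
  "v l = [c1] @ replicate l x @ replicate l y @ [c2]"

text \<open>k is 1-based; n_k = S ! (k - 1).\<close>
definition E :: "nat list \<Rightarrow> nat \<Rightarrow> nat \<Rightarrow> sym list" where
  "E S m k = concat (replicate (3*m - k) (U (bound S m))) @ [a1] @ replicate (S ! (k - 1)) b @ [a2]
             @ concat (replicate (3*m - k) (U (bound S m)))"

definition F :: "nat list \<Rightarrow> nat \<Rightarrow> nat \<Rightarrow> sym list" where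
  "F S m k = concat (replicate (2 * (3*m - k)) (U (bound S m)))"

definition blocks :: "nat list \<Rightarrow> sym list" where
  "blocks ns = concat (map (\<lambda>i. [a1] @ replicate i b @ [a2]) ns)"

end

theory Submission
  imports Defs
begin

definition blk :: "nat \<Rightarrow> sym list" where
  "blk i = [a1] @ replicate i b @ [a2]"

lemma blocks_Nil[simp]: "blocks [] = []"
  by (simp add: blocks_def)

lemma blocks_append[simp]: "blocks (xs @ ys) = blocks xs @ blocks ys"
  by (simp add: blocks_def)

lemma blocks_Cons: "blocks (i # xs) = blk i @ blocks xs"
  by (simp add: blocks_def blk_def)

lemma push_all: "qsteps (Q, w @ r) (Q @ w, r)"
proof (induction w arbitrary: Q)
  case Nil then show ?case by simp
next
  case (Cons s w)
  have "qstep (Q, s # w @ r) (Q @ [s], w @ r)" by (rule qstep.push)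
  moreover have "qsteps (Q @ [s], w @ r) ((Q @ [s]) @ w, r)" by (rule Cons)
  ultimately show ?case by simp
qed

lemma pop_all: "qsteps (w @ Q, w @ r) (Q, r)"
proof (induction w)
  case Nil then show ?case by simp
next
  case (Cons s w)
  have "qstep (s # w @ Q, s # w @ r) (w @ Q, w @ r)" by (rule qstep.pop)
  with Cons show ?case by simp
qed

lemma block_step:
  assumes "i \<le> B"
  shows "qsteps (blk i @ R, U B @ r) (R @ blk (B - i), r)"
proof -
  have UB: "U B @ r = [a1] @ [a1] @ replicate i b @ replicate (B - i) b @ [a2] @ [a2] @ r"
    using assms by (simp add: U_def flip: replicate_add)
  have "qsteps (blk i @ R, U B @ r) (replicate i b @ [a2] @ R, [a1] @ replicate i b @ replicate (B - i) b @ [a2] @ [a2] @ r)"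
    unfolding UB blk_def using pop_all[of "[a1]"] by simp
  also have "qsteps \<dots> (replicate i b @ [a2] @ R @ [a1], replicate i b @ replicate (B - i) b @ [a2] @ [a2] @ r)"
    using push_all[of "replicate i b @ [a2] @ R" "[a1]"] by simp
  also have "qsteps \<dots> ([a2] @ R @ [a1], replicate (B - i) b @ [a2] @ [a2] @ r)"
    by (rule pop_all)
  also have "qsteps \<dots> ([a2] @ R @ [a1] @ replicate (B - i) b, [a2] @ [a2] @ r)"
    using push_all[of "[a2] @ R @ [a1]" "replicate (B - i) b"] by simp
  also have "qsteps \<dots> (R @ [a1] @ replicate (B - i) b, [a2] @ r)"
    by (rule pop_all)
  also have "qsteps \<dots> (R @ blk (B - i), r)"
    using push_all[of "R @ [a1] @ replicate (B - i) b" "[a2]"] by (simp add: blk_def)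
  finally show ?thesis .
qed

lemma blocks_step:
  assumes "\<forall>i\<in>set is. i \<le> B"
  shows "qsteps (blocks is @ R, concat (replicate (length is) (U B)) @ r)
                (R @ blocks (map (\<lambda>i. B - i) is), r)"
  using assms
proof (induction "is" arbitrary: R)
  case Nil then show ?case by simp
next
  case (Cons i "is")
  have a: "qsteps (blk i @ blocks is @ R, U B @ concat (replicate (length is) (U B)) @ r)
       (blocks is @ R @ blk (B - i), concat (replicate (length is) (U B)) @ r)"
    using Cons.prems block_step[of i B "blocks is @ R" "concat (replicate (length is) (U B)) @ r"] by simp
  have c: "qsteps (blocks is @ R @ blk (B - i), concat (replicate (length is) (U B)) @ r)
      (R @ blk (B - i) @ blocks (map (\<lambda>i. B - i) is), r)"
    using Cons.IH[of "R @ blk (B - i)"] Cons.prems by simp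
  show ?case using rtranclp_trans[OF a c] by (simp add: blocks_Cons)
qed

theorem lemma7:
  fixes S :: "nat list" and m k :: nat and ns :: "nat list" and J :: nat and T :: "sym list"
  assumes "three_partition_instance S m"
    and "1 \<le> k" and "k \<le> 3 * m"
    and "length ns = 3 * m - k + 1"
    and "J < length ns"
    and "ns ! J = Max (set ns)"
    and "ns ! J = S ! (k - 1)"
  shows "qsteps (blocks ns,
                 v (4*k - 1) @ E S m k @ v (4*k - 1) @ v (4*k) @ F S m k @ v (4*k) @ T)
                (blocks (take J ns @ drop (Suc J) ns), T)"
proof -
  define B where "B = bound S m"
  define p where "p = 3 * m - k"
  define n where "n = ns ! J"
  define pre where "pre = take J ns"
  define post where "post = drop (Suc J) ns"
  define v1 where "v1 = v (4*k - 1)"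
  define v2 where "v2 = v (4*k)"
  define UU where "UU = (\<lambda>q. concat (replicate q (U B)))"
  have ns: "ns = pre @ [n] @ post"
    unfolding pre_def post_def n_def using assms(5) by (simp add: id_take_nth_drop)
  have lpre: "length pre = J" using assms(5) by (simp add: pre_def)
  have lpost: "length post = p - J" using assms(4,5) by (simp add: post_def p_def)
  have Jp: "J \<le> p" using assms(4,5) by (simp add: p_def)
  have nB: "n \<le> B"
  proof -
    have L: "length S = 3 * m" and H: "\<forall>i < length S. 2 * S ! i < sum_list S div m"
      using assms(1) unfolding three_partition_instance_def by auto
    have "k - 1 < length S" using L assms(2,3) by simp
    with H have "2 * S ! (k - 1) < sum_list S div m" by blast
    thus ?thesis using assms(7) unfolding n_def B_def bound_def by simp
  qed
  have allB: "\<forall>i\<in>set ns. i \<le> B"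
  proof
    fix i assume "i \<in> set ns"
    hence "i \<le> Max (set ns)" by simp
    thus "i \<le> B" using nB assms(6) n_def by simp
  qed
  hence preB: "\<forall>i\<in>set pre. i \<le> B" and postB: "\<forall>i\<in>set post. i \<le> B"
    using ns by auto
  define cpre where "cpre = map (\<lambda>i. B - i) pre"
  define cpost where "cpost = map (\<lambda>i. B - i) post"
  have cpreB: "\<forall>i\<in>set cpre. i \<le> B" "\<forall>i\<in>set cpost. i \<le> B" by (auto simp: cpre_def cpost_def)
  have ccpre: "map (\<lambda>i. B - i) cpre = pre" using preB
    by (simp add: cpre_def map_idI)
  have ccpost: "map (\<lambda>i. B - i) cpost = post" using postB
    by (simp add: cpost_def map_idI)
  have UUadd: "\<And>q r. UU (q + r) = UU q @ UU r" by (simp add: UU_def replicate_add)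
  have Eeq: "E S m k = UU J @ UU (p - J) @ blk n @ UU (p - J) @ UU J"
  proof -
    have "UU p = UU J @ UU (p - J)" using Jp UUadd[of J "p - J"] by simp
    moreover have "UU p = UU (p - J) @ UU J" using Jp UUadd[of "p - J" J] by (simp add: add.commute)
    ultimately show ?thesis
      using assms(7) n_def by (simp add: E_def UU_def B_def p_def blk_def)
  qed
  have Feq: "F S m k = UU J @ UU (p - J) @ UU (p - J) @ UU J"
  proof -
    have "2 * p = J + (p - J) + (p - J) + J" using Jp by simp
    hence "UU (2*p) = UU J @ UU (p - J) @ UU (p - J) @ UU J" by (metis UUadd append.assoc)
    thus ?thesis by (simp add: F_def UU_def B_def p_def)
  qed
  define X where "X = blocks cpre @ UU (p - J) @ blocks cpost @ UU J"
  define r1 where "r1 = v2 @ F S m k @ v2 @ T"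
  have "qsteps (blocks ns, v1 @ E S m k @ v1 @ v2 @ F S m k @ v2 @ T)
      (blocks pre @ blk n @ blocks post @ v1, UU J @ UU (p - J) @ blk n @ UU (p - J) @ UU J @ v1 @ v2 @ F S m k @ v2 @ T)"
    using push_all[of "blocks ns" v1] unfolding Eeq ns by (simp add: blocks_Cons)
  also have "qsteps \<dots> (blk n @ blocks post @ v1 @ blocks cpre, UU (p - J) @ blk n @ UU (p - J) @ UU J @ v1 @ v2 @ F S m k @ v2 @ T)"
    using blocks_step[OF preB, of "blk n @ blocks post @ v1" "UU (p - J) @ blk n @ UU (p - J) @ UU J @ v1 @ v2 @ F S m k @ v2 @ T"] lpre
    by (simp add: UU_def cpre_def)
  also have "qsteps \<dots> (blk n @ blocks post @ v1 @ blocks cpre @ UU (p - J), blk n @ UU (p - J) @ UU J @ v1 @ v2 @ F S m k @ v2 @ T)"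
    using push_all[of "blk n @ blocks post @ v1 @ blocks cpre" "UU (p - J)"] by simp
  also have "qsteps \<dots> (blocks post @ v1 @ blocks cpre @ UU (p - J), UU (p - J) @ UU J @ v1 @ v2 @ F S m k @ v2 @ T)"
    by (rule pop_all)
  also have "qsteps \<dots> (v1 @ blocks cpre @ UU (p - J) @ blocks cpost, UU J @ v1 @ v2 @ F S m k @ v2 @ T)"
    using blocks_step[OF postB, of "v1 @ blocks cpre @ UU (p - J)" "UU J @ v1 @ v2 @ F S m k @ v2 @ T"] lpost
    by (simp add: UU_def cpost_def)
  also have "qsteps \<dots> (v1 @ blocks cpre @ UU (p - J) @ blocks cpost @ UU J, v1 @ v2 @ F S m k @ v2 @ T)"
    using push_all[of "v1 @ blocks cpre @ UU (p - J) @ blocks cpost" "UU J"] by simp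
  also have "qsteps \<dots> (blocks cpre @ UU (p - J) @ blocks cpost @ UU J, v2 @ F S m k @ v2 @ T)"
    by (rule pop_all)
  also have "qsteps \<dots> (blocks cpre @ UU (p - J) @ blocks cpost @ UU J @ v2, UU J @ UU (p - J) @ UU (p - J) @ UU J @ v2 @ T)"
    using push_all[of "blocks cpre @ UU (p - J) @ blocks cpost @ UU J" v2] unfolding Feq by simp
  also have "qsteps \<dots> (UU (p - J) @ blocks cpost @ UU J @ v2 @ blocks pre, UU (p - J) @ UU (p - J) @ UU J @ v2 @ T)"
    using blocks_step[OF cpreB(1), of "UU (p - J) @ blocks cpost @ UU J @ v2" "UU (p - J) @ UU (p - J) @ UU J @ v2 @ T"] ccpre lpre
    by (simp add: UU_def cpre_def)
  also have "qsteps \<dots> (blocks cpost @ UU J @ v2 @ blocks pre, UU (p - J) @ UU J @ v2 @ T)"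
    by (rule pop_all)
  also have "qsteps \<dots> (UU J @ v2 @ blocks pre @ blocks post, UU J @ v2 @ T)"
    using blocks_step[OF cpreB(2), of "UU J @ v2 @ blocks pre" "UU J @ v2 @ T"] ccpost lpost
    by (simp add: UU_def cpost_def)
  also have "qsteps \<dots> (v2 @ blocks pre @ blocks post, v2 @ T)"
    by (rule pop_all)
  also have "qsteps \<dots> (blocks pre @ blocks post, T)"
    by (rule pop_all)
  finally show ?thesis
    unfolding v1_def v2_def pre_def post_def by simp
qed

end
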